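(* Let $\alpha$ be a graph function on a strongly connected digraph $G$ and let $v$ be a vertex with $\alpha_v^{\text{in}}\neq\alpha_v^{\text{out}}$. If $\bar\alpha$ is the graph function obtained from $\alpha$ by the balancing operation at $v$, then $\bar\alpha<\alpha$ in the order defined below.
   Context: $G$ is a strongly connected directed graph (self-loops allowed); a graph function assigns a real weight $\alpha_{uv}$ to each edge. $\alpha_v^{\text{in}}=\max_{u:(u,v)\in G}\alpha_{uv}$, $\alpha_v^{\text{out}}=\max_{w:(v,w)\in G}\alpha_{vw}$. The balancing operation at $v$ adds $(\alpha_v^{\text{out}}-\alpha_v^{\text{in}})/2$ to each $\alpha_{uv}$ with $u\ne v$, subtracts it from each $\alpha_{vw}$ with $w\ne v$, and leaves a self-loop unchanged. For real $w$, $G_\alpha^w$ is the subgraph of edges $(u,v)$ with $\alpha_{uv}\ge w$, isolated vertices removed (a vertex with a self-loop is not isolated). For two graph functions $\alpha,\gamma$ on $G$, $\alpha<\gamma$ means: for the largest $w$ with $G_\alpha^w\ne G_\gamma^w$, one has $G_\alpha^w\subset G_\gamma^w$. *)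

theory Defs
  imports Complex_Main
begin

text \<open>A graph function is a real weight on edges, represented as
  a function on pairs (only its values on E matter).\<close>

definition digraph :: "'a set \<Rightarrow> ('a \<times> 'a) set \<Rightarrow> bool" where
  "digraph V E \<longleftrightarrow> finite V \<and> E \<subseteq> V \<times> V"

definition strongly_connected :: "'a set \<Rightarrow> ('a \<times> 'a) set \<Rightarrow> bool" where
  "strongly_connected V E \<longleftrightarrow> V \<noteq> {} \<and> (\<forall>u\<in>V. \<forall>v\<in>V. (u, v) \<in> E\<^sup>*)"

definition alpha_in :: "('a \<times> 'a) set \<Rightarrow> ('a \<times> 'a \<Rightarrow> real) \<Rightarrow> 'a \<Rightarrow> real" where
  "alpha_in E \<alpha> v = Max {\<alpha> (u, v) | u. (u, v) \<in> E}"

definition alpha_out :: "('a \<times> 'a) set \<Rightarrow> ('a \<times> 'a \<Rightarrow> real) \<Rightarrow> 'a \<Rightarrow> real" where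
  "alpha_out E \<alpha> v = Max {\<alpha> (v, w) | w. (v, w) \<in> E}"

definition balance :: "('a \<times> 'a) set \<Rightarrow> ('a \<times> 'a \<Rightarrow> real) \<Rightarrow> 'a \<Rightarrow> ('a \<times> 'a \<Rightarrow> real)" where
  "balance E \<alpha> v = (\<lambda>(x, y).
     (let d = (alpha_out E \<alpha> v - alpha_in E \<alpha> v) / 2 in
      if x = y then \<alpha> (x, y)
      else if y = v then \<alpha> (x, y) + d
      else if x = v then \<alpha> (x, y) - d
      else \<alpha> (x, y)))"

text \<open>The subgraph G_\<alpha>^w: edges with weight \<ge> w, vertices = their endpoints
  (isolated vertices removed; a vertex with a self-loop is kept).  Represented as
  a pair (vertex set, edge set).\<close>
definition level_graph :: "('a \<times> 'a) set \<Rightarrow> ('a \<times> 'a \<Rightarrow> real) \<Rightarrow> real \<Rightarrow> 'a set \<times> ('a \<times> 'a) set" where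
  "level_graph E \<alpha> w =
     (let E' = {e \<in> E. \<alpha> e \<ge> w} in (fst ` E' \<union> snd ` E', E'))"

definition subgraph :: "'a set \<times> ('a \<times> 'a) set \<Rightarrow> 'a set \<times> ('a \<times> 'a) set \<Rightarrow> bool" where
  "subgraph H K \<longleftrightarrow> fst H \<subseteq> fst K \<and> snd H \<subseteq> snd K"

definition proper_subgraph :: "'a set \<times> ('a \<times> 'a) set \<Rightarrow> 'a set \<times> ('a \<times> 'a) set \<Rightarrow> bool" where
  "proper_subgraph H K \<longleftrightarrow> subgraph H K \<and> H \<noteq> K"

definition gf_less :: "('a \<times> 'a) set \<Rightarrow> ('a \<times> 'a \<Rightarrow> real) \<Rightarrow> ('a \<times> 'a \<Rightarrow> real) \<Rightarrow> bool" where
  "gf_less E \<alpha> \<gamma> \<longleftrightarrow>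
     (\<exists>w. level_graph E \<alpha> w \<noteq> level_graph E \<gamma> w
        \<and> (\<forall>w'. w' > w \<longrightarrow> level_graph E \<alpha> w' = level_graph E \<gamma> w')
        \<and> proper_subgraph (level_graph E \<alpha> w) (level_graph E \<gamma> w))"

end

theory Submission
  imports Defs
begin

lemma last_edge: "(x, v) \<in> E\<^sup>* \<Longrightarrow> x \<noteq> v \<Longrightarrow> \<exists>u. (u, v) \<in> E"
  by (erule rtranclE) auto

lemma first_edge: "(v, x) \<in> E\<^sup>* \<Longrightarrow> x \<noteq> v \<Longrightarrow> \<exists>u. (v, u) \<in> E"
  by (erule converse_rtranclE) auto

theorem lemma8:
  fixes V :: "'a set" and E :: "('a \<times> 'a) set" and \<alpha> :: "'a \<times> 'a \<Rightarrow> real" and v :: 'a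
  assumes "digraph V E"
    and "strongly_connected V E"
    and "v \<in> V"
    and "alpha_in E \<alpha> v \<noteq> alpha_out E \<alpha> v"
  shows "gf_less E (balance E \<alpha> v) \<alpha>"
proof -
  define I where "I = {\<alpha> (u, v) | u. (u, v) \<in> E}"
  define Ou where "Ou = {\<alpha> (v, w) | w. (v, w) \<in> E}"
  have finE: "finite E" using assms(1) unfolding digraph_def
    by (meson finite_SigmaI finite_subset)
  have fI: "finite I"
  proof -
    have "I = (\<lambda>e. \<alpha> e) ` {e\<in>E. snd e = v}" unfolding I_def by force
    thus ?thesis using finE by simp
  qed
  have fOu: "finite Ou"
  proof -
    have "Ou = (\<lambda>e. \<alpha> e) ` {e\<in>E. fst e = v}" unfolding Ou_def by force
    thus ?thesis using finE by simp
  qed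
  have ain: "alpha_in E \<alpha> v = Max I" unfolding alpha_in_def I_def ..
  have aout: "alpha_out E \<alpha> v = Max Ou" unfolding alpha_out_def Ou_def ..
  have sc: "\<forall>u\<in>V. \<forall>w\<in>V. (u, w) \<in> E\<^sup>*" using assms(2) unfolding strongly_connected_def by blast
  have EV: "E \<subseteq> V \<times> V" using assms(1) unfolding digraph_def by blast
  have neI: "I \<noteq> {}" and neOu: "Ou \<noteq> {}"
  proof -
    have "I \<noteq> {} \<or> Ou \<noteq> {}"
    proof (rule ccontr)
      assume "\<not> (I \<noteq> {} \<or> Ou \<noteq> {})"
      then have "I = {}" "Ou = {}" by simp_all
      then have "Max I = Max Ou" by simp
      then show False using assms(4) ain aout by simp
    qed
    moreover have "I \<noteq> {}" if ne: "Ou \<noteq> {}"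
    proof -
      obtain x where x: "(v, x) \<in> E" using ne unfolding Ou_def by auto
      show ?thesis
      proof (cases "x = v")
        case True thus ?thesis using x unfolding I_def by auto
      next
        case False
        have "x \<in> V" using x EV by auto
        then have "(x, v) \<in> E\<^sup>*" using sc assms(3) by simp
        then obtain u where "(u, v) \<in> E" using last_edge[OF _ False] by metis
        thus ?thesis unfolding I_def by auto
      qed
    qed
    moreover have "Ou \<noteq> {}" if ne: "I \<noteq> {}"
    proof -
      obtain x where x: "(x, v) \<in> E" using ne unfolding I_def by auto
      show ?thesis
      proof (cases "x = v")
        case True thus ?thesis using x unfolding Ou_def by auto
      next
        case False
        have "x \<in> V" using x EV by auto
        then have "(v, x) \<in> E\<^sup>*" using sc assms(3) by simp
        then obtain u where "(v, u) \<in> E" using first_edge[OF _ False] by metis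
        thus ?thesis unfolding Ou_def by auto
      qed
    qed
    ultimately show "I \<noteq> {}" "Ou \<noteq> {}" by blast+
  qed
  define a where "a = Max I"
  define b where "b = Max Ou"
  define d where "d = (b - a) / 2"
  define M where "M = max a b"
  have ab: "a \<noteq> b" using assms(4) ain aout a_def b_def by simp
  have inle: "\<alpha> (u, v) \<le> a" if "(u, v) \<in> E" for u
    unfolding a_def using fI that by (intro Max_ge) (auto simp: I_def)
  have outle: "\<alpha> (v, w) \<le> b" if "(v, w) \<in> E" for w
    unfolding b_def using fOu that by (intro Max_ge) (auto simp: Ou_def)
  define \<beta> where "\<beta> = balance E \<alpha> v"
  have bal: "\<beta> (x, y) = (if x = y then \<alpha> (x, y) else if y = v then \<alpha> (x, y) + d
      else if x = v then \<alpha> (x, y) - d else \<alpha> (x, y))" for x y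
    unfolding \<beta>_def balance_def d_def a_def b_def ain[symmetric] aout[symmetric] by (simp add: Let_def)
  have inc: "\<alpha> (x, y) \<le> M \<and> \<beta> (x, y) < M" if eE: "(x, y) \<in> E" and vv: "x = v \<or> y = v" for x y
  proof -
    consider "x = v" "y = v" | "y = v" "x \<noteq> v" | "x = v" "y \<noteq> v" using vv by blast
    thus ?thesis
    proof cases
      case 1
      then have "\<alpha> (x, y) \<le> a" "\<alpha> (x, y) \<le> b" using inle outle eE by auto
      thus ?thesis using 1 bal ab unfolding M_def by auto
    next
      case 2
      then have "\<alpha> (x, y) \<le> a" using inle eE by auto
      moreover have "\<beta> (x, y) = \<alpha> (x, y) + d" using 2 bal by simp
      ultimately show ?thesis using ab unfolding M_def d_def by (cases "a \<le> b") (auto simp: max_def field_simps)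
    next
      case 3
      then have "\<alpha> (x, y) \<le> b" using outle eE by auto
      moreover have "\<beta> (x, y) = \<alpha> (x, y) - d" using 3 bal by simp
      ultimately show ?thesis using ab unfolding M_def d_def by (cases "a \<le> b") (auto simp: max_def field_simps)
    qed
  qed
  have noninc: "\<beta> (x, y) = \<alpha> (x, y)" if "x \<noteq> v" "y \<noteq> v" for x y
    using that bal by auto
  obtain e0 where e0: "e0 \<in> E" "fst e0 = v \<or> snd e0 = v" "\<alpha> e0 = M"
  proof (cases "a \<le> b")
    case True
    have "b \<in> Ou" unfolding b_def using fOu neOu by (rule Max_in)
    then obtain w where "(v, w) \<in> E" "\<alpha> (v, w) = b" unfolding Ou_def by auto
    thus ?thesis using that True unfolding M_def by (metis fst_conv max.absorb2)
  next
    case False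
    have "a \<in> I" unfolding a_def using fI neI by (rule Max_in)
    then obtain u where "(u, v) \<in> E" "\<alpha> (u, v) = a" unfolding I_def by auto
    thus ?thesis using that False unfolding M_def by (metis snd_conv max_def)
  qed
  have eqE: "{e \<in> E. \<beta> e \<ge> w} = {e \<in> E. \<alpha> e \<ge> w}" if "w > M" for w
  proof -
    have "\<beta> e \<ge> w \<longleftrightarrow> \<alpha> e \<ge> w" if "e \<in> E" for e
    proof (cases e)
      case (Pair x y)
      show ?thesis
      proof (cases "x = v \<or> y = v")
        case True thus ?thesis using inc[of x y] Pair \<open>e \<in> E\<close> \<open>w > M\<close> by auto
      next
        case False thus ?thesis using noninc[of x y] Pair by auto
      qed
    qed
    thus ?thesis by blast
  qed
  have subE: "{e \<in> E. \<beta> e \<ge> M} \<subseteq> {e \<in> E. \<alpha> e \<ge> M}"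
  proof
    fix e assume e: "e \<in> {e \<in> E. \<beta> e \<ge> M}"
    obtain x y where xy: "e = (x, y)" by (cases e)
    show "e \<in> {e \<in> E. \<alpha> e \<ge> M}"
    proof (cases "x = v \<or> y = v")
      case True thus ?thesis using inc[of x y] xy e by auto
    next
      case False thus ?thesis using noninc[of x y] xy e by auto
    qed
  qed
  have e0n: "e0 \<notin> {e \<in> E. \<beta> e \<ge> M}"
    using inc[of "fst e0" "snd e0"] e0 by auto
  have e0i: "e0 \<in> {e \<in> E. \<alpha> e \<ge> M}" using e0 by auto
  show ?thesis
    unfolding \<beta>_def[symmetric] gf_less_def
  proof (intro exI[of _ M] conjI allI impI)
    show "level_graph E \<beta> M \<noteq> level_graph E \<alpha> M"
      unfolding level_graph_def Let_def using e0n e0i by auto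
    show "level_graph E \<beta> w' = level_graph E \<alpha> w'" if "M < w'" for w'
      unfolding level_graph_def Let_def using eqE[OF that] by simp
    show "proper_subgraph (level_graph E \<beta> M) (level_graph E \<alpha> M)"
      unfolding proper_subgraph_def subgraph_def level_graph_def Let_def
      using subE e0n e0i by (auto simp: image_mono)
  qed
qed

end
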